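(* Let $t\ge 2$, let $n_1,\dots,n_t$ be positive integers, and let $G=K_{n_1,\dots,n_t}$ be the complete $t$-partite graph with partite sets $V_1,\dots,V_t$, $|V_i|=n_i$. Let $N_t=\{1,\dots,t\}$ and $f(I)=\sum_{i\in I}n_i$ for $I\subseteq N_t$. Let $p$ be a positive integer with $f(N_t)>p$. Let $D$ be an optimal $\gamma_p(G)$-set, let $\ell=\min\{|D_i|: i\in N_t\setminus I_D\}$ and $A=\{i\in N_t\setminus I_D: |D_i|=\ell+1\}$. Then $|A|=0$ or $2\le |A|\le t-|I_D|-1$.
   Context: A set $S\subseteq V(G)$ is a $p$-dominating set of $G$ if every vertex $v\in V(G)\setminus S$ has at least $p$ neighbors in $S$. The $p$-domination number $\gamma_p(G)$ is the minimum cardinality of a $p$-dominating set of $G$, and a $\gamma_p(G)$-set is a $p$-dominating set of cardinality $\gamma_p(G)$. For $D\subseteq V(G)$ write $D_i=V_i\cap D$ for $i\in N_t$ and $I_D=\{i\in N_t: |D_i|=|V_i|\}$. For a $\gamma_p(G)$-set $D$ with $|I_D|<t$ define $$\mu(D)=\sum_{i\in N_t\setminus I_D}\left|\,|D_i|-\frac{|D|-f(I_D)}{t-|I_D|}\right|.$$ A $\gamma_p(G)$-set $D$ is optimal if: (1) $f(I_D)<p$; (2) $|I_D|\ge |I_S|$ for every $\gamma_p(G)$-set $S$; (3) $\mu(D)\le\mu(S)$ for every $\gamma_p(G)$-set $S$ with $I_S=I_D$. (For an optimal $D$, $N_t\setminus I_D\neq\emptyset$ and every $|D_i|$, $i\in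 N_t\setminus I_D$, equals $\ell$ or $\ell+1$; the paper defines $A$ as the set of those $i$ with $|D_i|=\ell+1$, which is empty when all these values equal $\ell$.) *)

theory Defs
  imports Complex_Main
begin

definition Nt :: "nat \<Rightarrow> nat set" where
  "Nt t = {1..t}"

definition part :: "(nat \<Rightarrow> nat) \<Rightarrow> nat \<Rightarrow> (nat \<times> nat) set" where
  "part n i = {(i, x) | x. x < n i}"

definition verts :: "(nat \<Rightarrow> nat) \<Rightarrow> nat \<Rightarrow> (nat \<times> nat) set" where
  "verts n t = (\<Union>i\<in>Nt t. part n i)"

definition adj :: "nat \<times> nat \<Rightarrow> nat \<times> nat \<Rightarrow> bool" where
  "adj u v \<longleftrightarrow> fst u \<noteq> fst v"

definition fsum :: "(nat \<Rightarrow> nat) \<Rightarrow> nat set \<Rightarrow> nat" where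
  "fsum n I = (\<Sum>i\<in>I. n i)"

definition p_dominating :: "(nat \<Rightarrow> nat) \<Rightarrow> nat \<Rightarrow> nat \<Rightarrow> (nat \<times> nat) set \<Rightarrow> bool" where
  "p_dominating n t p S \<longleftrightarrow> S \<subseteq> verts n t \<and>
     (\<forall>v \<in> verts n t - S. card {u \<in> S. adj u v} \<ge> p)"

definition gamma_p :: "(nat \<Rightarrow> nat) \<Rightarrow> nat \<Rightarrow> nat \<Rightarrow> nat" where
  "gamma_p n t p = Min {card S | S. p_dominating n t p S}"

definition gamma_p_set :: "(nat \<Rightarrow> nat) \<Rightarrow> nat \<Rightarrow> nat \<Rightarrow> (nat \<times> nat) set \<Rightarrow> bool" where
  "gamma_p_set n t p S \<longleftrightarrow> p_dominating n t p S \<and> card S = gamma_p n t p"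

definition Dpart :: "(nat \<times> nat) set \<Rightarrow> nat \<Rightarrow> (nat \<times> nat) set" where
  "Dpart D i = {v \<in> D. fst v = i}"

definition ID :: "(nat \<Rightarrow> nat) \<Rightarrow> nat \<Rightarrow> (nat \<times> nat) set \<Rightarrow> nat set" where
  "ID n t D = {i \<in> Nt t. card (Dpart D i) = n i}"

definition mu :: "(nat \<Rightarrow> nat) \<Rightarrow> nat \<Rightarrow> (nat \<times> nat) set \<Rightarrow> real" where
  "mu n t D = (\<Sum>i \<in> Nt t - ID n t D.
      \<bar>real (card (Dpart D i)) -
        (real (card D) - real (fsum n (ID n t D))) / (real t - real (card (ID n t D)))\<bar>)"

definition optimal :: "(nat \<Rightarrow> nat) \<Rightarrow> nat \<Rightarrow> nat \<Rightarrow> (nat \<times> nat) set \<Rightarrow> bool" where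
  "optimal n t p D \<longleftrightarrow> gamma_p_set n t p D \<and>
     fsum n (ID n t D) < p \<and>
     (\<forall>S. gamma_p_set n t p S \<longrightarrow> card (ID n t S) \<le> card (ID n t D)) \<and>
     (\<forall>S. gamma_p_set n t p S \<and> ID n t S = ID n t D \<longrightarrow> mu n t D \<le> mu n t S)"

end

theory Submission
  imports Defs
begin

lemma part_eq: "part n i = Pair i ` {..<n i}"
  unfolding part_def by auto

lemma card_part: "card (part n i) = n i"
  unfolding part_eq by (simp add: card_image inj_on_def)

lemma finite_part: "finite (part n i)"
  unfolding part_eq by simp

lemma finite_verts: "finite (verts n t)"
  unfolding verts_def Nt_def by (simp add: finite_part)

lemma Dpart_eq: "S \<subseteq> verts n t \<Longrightarrow> Dpart S i = S \<inter> part n i"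
  unfolding Dpart_def verts_def part_def by auto

lemma card_Dpart_le: "S \<subseteq> verts n t \<Longrightarrow> card (Dpart S i) \<le> n i"
  using Dpart_eq[of S n t i] card_mono[OF finite_part, of "S \<inter> part n i" n i] card_part[of n i]
  by auto

lemma pdom_iff:
  assumes "S \<subseteq> verts n t"
  shows "p_dominating n t p S \<longleftrightarrow>
    (\<forall>i\<in>Nt t. card (Dpart S i) < n i \<longrightarrow> p \<le> card S - card (Dpart S i))"
proof -
  have finS: "finite S" using assms finite_verts finite_subset by blast
  have key: "card {u \<in> S. adj u v} = card S - card (Dpart S (fst v))" for v
  proof -
    have "{u \<in> S. adj u v} = S - Dpart S (fst v)" by (auto simp: adj_def Dpart_def)
    moreover have "Dpart S (fst v) \<subseteq> S" by (auto simp: Dpart_def)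
    ultimately show ?thesis using finS by (simp add: card_Diff_subset finite_subset)
  qed
  show ?thesis
  proof
    assume pd: "p_dominating n t p S"
    show "\<forall>i\<in>Nt t. card (Dpart S i) < n i \<longrightarrow> p \<le> card S - card (Dpart S i)"
    proof (intro ballI impI)
      fix i assume i: "i \<in> Nt t" and lt: "card (Dpart S i) < n i"
      have "\<not> part n i \<subseteq> S"
      proof
        assume "part n i \<subseteq> S"
        hence "Dpart S i = part n i" using Dpart_eq[OF assms] by auto
        thus False using lt card_part by simp
      qed
      then obtain v where v: "v \<in> part n i" "v \<notin> S" by blast
      have "v \<in> verts n t" using v i unfolding verts_def by auto
      moreover have "fst v = i" using v unfolding part_def by auto
      ultimately have "p \<le> card {u \<in> S. adj u v}" using pd v
        unfolding p_dominating_def by blast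
      thus "p \<le> card S - card (Dpart S i)" using key[of v] \<open>fst v = i\<close> by simp
    qed
  next
    assume H: "\<forall>i\<in>Nt t. card (Dpart S i) < n i \<longrightarrow> p \<le> card S - card (Dpart S i)"
    show "p_dominating n t p S"
      unfolding p_dominating_def
    proof (intro conjI assms ballI)
      fix v assume v: "v \<in> verts n t - S"
      then obtain i where i: "i \<in> Nt t" "v \<in> part n i" unfolding verts_def by auto
      have fv: "fst v = i" using i unfolding part_def by auto
      have "Dpart S i \<subseteq> part n i - {v}" using Dpart_eq[OF assms] v by auto
      hence "card (Dpart S i) \<le> card (part n i - {v})" by (intro card_mono) (simp_all add: finite_part)
      also have "\<dots> < n i" using i card_part[of n i] finite_part[of n i]
        by (metis card_Diff1_less)
      finally have "card (Dpart S i) < n i" .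
      thus "p \<le> card {u \<in> S. adj u v}" using H i key fv by auto
    qed
  qed
qed

lemma card_sum:
  assumes "S \<subseteq> verts n t"
  shows "card S = (\<Sum>i\<in>Nt t. card (Dpart S i))"
proof -
  have "S = (\<Union>i\<in>Nt t. Dpart S i)" using assms unfolding Dpart_def verts_def part_def by auto
  moreover have "finite S" using assms finite_verts finite_subset by blast
  moreover have "card (\<Union>i\<in>Nt t. Dpart S i) = (\<Sum>i\<in>Nt t. card (Dpart S i))"
  proof (rule card_UN_disjoint)
    show "finite (Nt t)" unfolding Nt_def by simp
    show "\<forall>i\<in>Nt t. finite (Dpart S i)"
      using \<open>finite S\<close> by (auto simp: Dpart_def)
    show "\<forall>i\<in>Nt t. \<forall>j\<in>Nt t. i \<noteq> j \<longrightarrow> Dpart S i \<inter> Dpart S j = {}"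
      by (auto simp: Dpart_def)
  qed
  ultimately show ?thesis by simp
qed

lemma gamma_le:
  assumes "p_dominating n t p S"
  shows "gamma_p n t p \<le> card S"
proof -
  have "{card S | S. p_dominating n t p S} \<subseteq> {..card (verts n t)}"
    using card_mono[OF finite_verts] by (auto simp: p_dominating_def)
  hence "finite {card S | S. p_dominating n t p S}" using finite_subset by blast
  thus ?thesis unfolding gamma_p_def using assms by (auto intro: Min_le)
qed


lemma abs_ineq:
  fixes c :: real and L M :: real
  assumes "L < c" "c < M" "L + 2 \<le> M"
  shows "\<bar>(M - 1) - c\<bar> + \<bar>(L + 1) - c\<bar> < \<bar>M - c\<bar> + \<bar>L - c\<bar>"
  using assms by (auto simp: abs_if)

lemma sum2:
  fixes f :: "nat \<Rightarrow> real"
  assumes "finite J" "a \<in> J" "b \<in> J" "a \<noteq> b"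
  shows "sum f J = f a + f b + sum f (J - {a} - {b})"
proof -
  have "sum f J = f a + sum f (J - {a})" by (rule sum.remove[OF assms(1,2)])
  moreover have "sum f (J - {a}) = f b + sum f (J - {a} - {b})"
    by (rule sum.remove) (use assms in auto)
  ultimately show ?thesis by simp
qed

theorem lemma5:
  fixes n :: "nat \<Rightarrow> nat" and t p :: nat and D :: "(nat \<times> nat) set"
  assumes "t \<ge> 2"
    and "\<forall>i \<in> Nt t. n i > 0"
    and "p > 0"
    and "fsum n (Nt t) > p"
    and "optimal n t p D"
  shows "let l = Min {card (Dpart D i) | i. i \<in> Nt t - ID n t D};
             A = {i \<in> Nt t - ID n t D. card (Dpart D i) = l + 1}
         in card A = 0 \<or> (2 \<le> card A \<and> card A \<le> t - card (ID n t D) - 1)"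
proof -
  have gD: "gamma_p_set n t p D" and fI: "fsum n (ID n t D) < p"
    and maxI: "\<forall>S. gamma_p_set n t p S \<longrightarrow> card (ID n t S) \<le> card (ID n t D)"
    and muopt: "\<forall>S. gamma_p_set n t p S \<and> ID n t S = ID n t D \<longrightarrow> mu n t D \<le> mu n t S"
    using assms(5) unfolding optimal_def by auto
  have pD: "p_dominating n t p D" and cD: "card D = gamma_p n t p"
    using gD unfolding gamma_p_set_def by auto
  have Dsub: "D \<subseteq> verts n t" using pD unfolding p_dominating_def by auto
  have finD: "finite D" using Dsub finite_verts finite_subset by blast
  have finDp: "finite (Dpart D i)" for i using finD by (auto simp: Dpart_def)
  define d where "d i = card (Dpart D i)" for i
  define I where "I = ID n t D"
  define J where "J = Nt t - I"
  have finNt: "finite (Nt t)" unfolding Nt_def by simp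
  have cNt: "card (Nt t) = t" unfolding Nt_def by simp
  have Isub: "I \<subseteq> Nt t" unfolding I_def ID_def by auto
  have finJ: "finite J" using finNt unfolding J_def by simp
  have finI: "finite I" using finNt Isub finite_subset by blast
  have dle: "\<forall>i. d i \<le> n i" using card_Dpart_le[OF Dsub] unfolding d_def by auto
  have inI: "\<forall>i\<in>I. d i = n i" unfolding I_def ID_def d_def by auto
  have inJ: "\<forall>i\<in>J. d i < n i" using dle unfolding J_def I_def ID_def d_def
    by (metis (mono_tags, lifting) DiffE le_neq_implies_less mem_Collect_eq)
  have condJ: "\<forall>i\<in>J. p \<le> card D - d i"
    using pD inJ unfolding pdom_iff[OF Dsub] d_def J_def by auto
  have Jne: "J \<noteq> {}"
  proof
    assume "J = {}"
    hence "I = Nt t" using Isub unfolding J_def by auto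
    thus False using fI assms(4) unfolding I_def by simp
  qed
  define l where "l = Min (d ` J)"
  have setl: "{card (Dpart D i) | i. i \<in> Nt t - ID n t D} = d ` J"
    by (auto simp: d_def J_def I_def)
  have l_le: "\<forall>i\<in>J. l \<le> d i" unfolding l_def using finJ by auto
  obtain b where b: "b \<in> J" "d b = l" unfolding l_def using finJ Jne
    by (metis (mono_tags, lifting) Min_in empty_is_image finite_imageI imageE)
  define M where "M = Max (d ` J)"
  have M_ge: "\<forall>i\<in>J. d i \<le> M" unfolding M_def using finJ by auto
  obtain a where a: "a \<in> J" "d a = M" unfolding M_def using finJ Jne
    by (metis (mono_tags, lifting) Max_in empty_is_image finite_imageI imageE)
  have JNt: "J \<subseteq> Nt t" unfolding J_def by auto
  have sumD: "card D = fsum n I + sum d J"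
  proof -
    have "card D = sum d (Nt t)" using card_sum[OF Dsub] unfolding d_def by simp
    also have "\<dots> = sum d I + sum d J" unfolding J_def
      using sum.subset_diff[OF Isub finNt, of d] by simp
    also have "sum d I = fsum n I" unfolding fsum_def using inI by simp
    finally show ?thesis .
  qed
  have cJ: "card J = t - card I" unfolding J_def using card_Diff_subset[OF finI Isub] cNt by simp
  have cIt: "card I \<le> t" using card_mono[OF finNt Isub] cNt by simp
  have Mle: "M \<le> l + 1"
  proof (rule ccontr)
    assume "\<not> M \<le> l + 1"
    hence Ml: "l + 2 \<le> M" by simp
    have ab: "a \<noteq> b" using a b Ml by auto
    have "Dpart D a \<noteq> {}" using a Ml unfolding d_def by auto
    then obtain v where v: "v \<in> D" "fst v = a" unfolding Dpart_def by auto
    have "\<not> part n b \<subseteq> D"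
    proof
      assume "part n b \<subseteq> D"
      hence "Dpart D b = part n b" using Dpart_eq[OF Dsub] by auto
      thus False using inJ b card_part[of n b] unfolding d_def by auto
    qed
    then obtain w where w: "w \<in> part n b" "w \<notin> D" by blast
    have fw: "fst w = b" using w unfolding part_def by auto
    have wv: "w \<in> verts n t" using w b JNt unfolding verts_def by auto
    define S where "S = insert w (D - {v})"
    have Ssub: "S \<subseteq> verts n t" using Dsub wv unfolding S_def by auto
    have cS: "card S = card D"
    proof -
      have "card S = Suc (card (D - {v}))" unfolding S_def using w finD by simp
      also have "\<dots> = card D"
      proof -
        have "card D > 0" using v finD by (auto simp: card_gt_0_iff)
        thus ?thesis using v finD by simp
      qed
      finally show ?thesis .
    qed
    have dS: "Dpart S i = (if i = a then Dpart D a - {v} else if i = b then insert w (Dpart D b)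
                else Dpart D i)" for i
      using v w fw ab unfolding S_def Dpart_def by auto
    have vDa: "v \<in> Dpart D a" using v unfolding Dpart_def by auto
    have wDb: "w \<notin> Dpart D b" using w unfolding Dpart_def by auto
    have cdS: "card (Dpart S i) = (if i = a then M - 1 else if i = b then l + 1 else d i)" for i
      using dS[of i] finDp vDa wDb a b unfolding d_def by (auto simp: card_insert_if)
    have pS: "p_dominating n t p S"
      unfolding pdom_iff[OF Ssub]
    proof (intro ballI impI)
      fix i assume i: "i \<in> Nt t" and lt: "card (Dpart S i) < n i"
      have "i \<in> J"
      proof (rule ccontr)
        assume "i \<notin> J"
        hence "i \<in> I" "i \<noteq> a" "i \<noteq> b" using i a b unfolding J_def by auto
        thus False using lt cdS[of i] inI by auto
      qed
      hence "card (Dpart S i) \<le> M" using cdS[of i] M_ge Ml by auto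
      moreover have "p \<le> card D - M" using condJ a by auto
      ultimately show "p \<le> card S - card (Dpart S i)" using cS by linarith
    qed
    have gS: "gamma_p_set n t p S" unfolding gamma_p_set_def using pS cS cD by simp
    have IS1: "I \<subseteq> ID n t S"
    proof
      fix i assume "i \<in> I"
      hence "i \<noteq> a" "i \<noteq> b" "i \<in> Nt t" using a b Isub unfolding J_def by auto
      thus "i \<in> ID n t S" using cdS[of i] inI \<open>i \<in> I\<close> unfolding ID_def by auto
    qed
    have IS2: "ID n t S \<subseteq> I \<union> {i. i = b \<and> l + 1 = n b}"
    proof
      fix i assume iS: "i \<in> ID n t S"
      show "i \<in> I \<union> {i. i = b \<and> l + 1 = n b}"
      proof (cases "i \<in> J")
        case True
        have "i \<noteq> a" using iS cdS[of a] inJ a unfolding ID_def by force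
        moreover have "i = b \<longrightarrow> l + 1 = n b" using iS cdS[of b] ab unfolding ID_def by auto
        moreover have "i \<noteq> b \<longrightarrow> False" using iS cdS[of i] inJ True \<open>i \<noteq> a\<close> unfolding ID_def by (auto split: if_splits)
        ultimately show ?thesis by auto
      next
        case False thus ?thesis using iS unfolding J_def ID_def by auto
      qed
    qed
    show False
    proof (cases "l + 1 = n b")
      case True
      have "b \<in> ID n t S" using cdS[of b] True b JNt ab unfolding ID_def by auto
      moreover have "b \<notin> I" using b unfolding J_def by auto
      ultimately have "I \<subset> ID n t S" using IS1 by auto
      moreover have "finite (ID n t S)" using finNt unfolding ID_def by simp
      ultimately have "card I < card (ID n t S)" by (simp add: psubset_card_mono)
      thus False using maxI gS unfolding I_def by force
    next
      case False
      hence IS: "ID n t S = I" using IS1 IS2 by auto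
      hence mle: "mu n t D \<le> mu n t S" using muopt gS unfolding I_def by auto
      define c where "c = (real (card D) - real (fsum n I)) / (real t - real (card I))"
      have muD: "mu n t D = (\<Sum>i\<in>J. \<bar>real (d i) - c\<bar>)"
        unfolding mu_def c_def J_def I_def d_def by simp
      have muS: "mu n t S = (\<Sum>i\<in>J. \<bar>real (card (Dpart S i)) - c\<bar>)"
        unfolding mu_def c_def J_def IS cS by (simp add: I_def)
      have cJpos: "card J > 0" using finJ Jne by (simp add: card_gt_0_iff)
      have c_eq: "c = real (sum d J) / real (card J)"
        unfolding c_def using sumD cJ cIt by (simp add: of_nat_diff)
      have s1: "real (card J) * real l < real (sum d J)"
      proof -
        have "(\<Sum>i\<in>J. l) < sum d J"
          proof (rule sum_strict_mono_ex1[OF finJ])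
          show "\<forall>x\<in>J. l \<le> d x" using l_le by blast
          show "\<exists>x\<in>J. l < d x" using a Ml by (intro bexI[of _ a]) auto
        qed
        hence "card J * l < sum d J" by simp
        thus ?thesis by (metis of_nat_less_iff of_nat_mult)
      qed
      have s2: "real (sum d J) < real (card J) * real M"
      proof -
        have "sum d J < (\<Sum>i\<in>J. M)"
          proof (rule sum_strict_mono_ex1[OF finJ])
          show "\<forall>x\<in>J. d x \<le> M" using M_ge by blast
          show "\<exists>x\<in>J. d x < M" using b Ml by (intro bexI[of _ b]) auto
        qed
        hence "sum d J < card J * M" by simp
        thus ?thesis by (metis of_nat_less_iff of_nat_mult)
      qed
      have lc: "real l < c" using s1 cJpos unfolding c_eq by (simp add: field_simps)
      have cM: "c < real M" using s2 cJpos unfolding c_eq by (simp add: field_simps)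
      have J2: "J = insert a (insert b (J - {a} - {b}))" using a b by auto
      have rest: "(\<Sum>i\<in>J - {a} - {b}. \<bar>real (card (Dpart S i)) - c\<bar>)
           = (\<Sum>i\<in>J - {a} - {b}. \<bar>real (d i) - c\<bar>)"
        by (rule sum.cong) (auto simp: cdS)
      have eD: "mu n t D = \<bar>real (d a) - c\<bar> + \<bar>real (d b) - c\<bar> + (\<Sum>i\<in>J - {a} - {b}. \<bar>real (d i) - c\<bar>)"
        unfolding muD by (rule sum2[OF finJ a(1) b(1) ab])
      have eS: "mu n t S = \<bar>real (M - 1) - c\<bar> + \<bar>real (l + 1) - c\<bar> + (\<Sum>i\<in>J - {a} - {b}. \<bar>real (d i) - c\<bar>)"
        unfolding muS rest[symmetric] using sum2[OF finJ a(1) b(1) ab, of "\<lambda>i. \<bar>real (card (Dpart S i)) - c\<bar>"] cdS ab by simp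
      have "real (M - 1) = real M - 1" using Ml by (simp add: of_nat_diff)
      hence "\<bar>real (M - 1) - c\<bar> + \<bar>real (l + 1) - c\<bar> < \<bar>real M - c\<bar> + \<bar>real l - c\<bar>"
        using abs_ineq[of "real l" c "real M"] lc cM Ml by simp
      thus False using mle eD eS a b by simp
    qed
  qed
  define A where "A = {i \<in> J. d i = l + 1}"
  have A1: "card A \<noteq> 1"
  proof
    assume "card A = 1"
    then obtain j where Aj: "A = {j}" by (auto simp: card_Suc_eq)
    hence j: "j \<in> J" "d j = l + 1" unfolding A_def by auto
    have others: "\<forall>i\<in>J. i \<noteq> j \<longrightarrow> d i = l"
    proof (intro ballI impI)
      fix i assume "i \<in> J" "i \<noteq> j"
      hence "i \<notin> A" using Aj by auto
      thus "d i = l" using l_le M_ge Mle \<open>i \<in> J\<close> unfolding A_def by fastforce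
    qed
    have "Dpart D j \<noteq> {}" using j unfolding d_def by auto
    then obtain v where v: "v \<in> D" "fst v = j" unfolding Dpart_def by auto
    define S where "S = D - {v}"
    have Ssub: "S \<subseteq> verts n t" using Dsub unfolding S_def by auto
    have cS: "card S = card D - 1" unfolding S_def using v finD by simp
    have vDj: "v \<in> Dpart D j" using v unfolding Dpart_def by auto
    have cdS: "card (Dpart S i) = (if i = j then l else d i)" for i
    proof -
      have "Dpart S i = (if i = j then Dpart D j - {v} else Dpart D i)"
        using v unfolding S_def Dpart_def by auto
      thus ?thesis using finDp vDj j unfolding d_def by auto
    qed
    have pS: "p_dominating n t p S"
      unfolding pdom_iff[OF Ssub]
    proof (intro ballI impI)
      fix i assume i: "i \<in> Nt t" and lt: "card (Dpart S i) < n i"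
      have "i \<in> J"
      proof (rule ccontr)
        assume "i \<notin> J"
        hence "i \<in> I" "i \<noteq> j" using i j unfolding J_def by auto
        thus False using lt cdS[of i] inI by auto
      qed
      hence "card (Dpart S i) = l" using cdS[of i] others by auto
      moreover have "p \<le> card D - (l + 1)" using condJ j by auto
      ultimately show "p \<le> card S - card (Dpart S i)" using cS by linarith
    qed
    have "card D > 0" using v finD by (auto simp: card_gt_0_iff)
    hence "card S < card D" using cS by simp
    thus False using gamma_le[OF pS] cD by simp
  qed
  have "card A < card J"
  proof (rule psubset_card_mono[OF finJ])
    have "b \<notin> A" using b unfolding A_def by auto
    moreover have "A \<subseteq> J" unfolding A_def by auto
    ultimately show "A \<subset> J" using b by blast
  qed
  hence "card A \<le> t - card I - 1" using cJ by simp
  moreover have eqA: "{i \<in> Nt t - ID n t D. card (Dpart D i) =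
      Min {card (Dpart D i) | i. i \<in> Nt t - ID n t D} + 1} = A"
    unfolding setl unfolding A_def J_def I_def d_def l_def by simp
  ultimately show ?thesis unfolding Let_def eqA I_def[symmetric]
    using A1 by presburger
qed

end
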